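(* Let $n\ge 2$ and let $v_1,\ldots,v_n$ be positive integers all less than or equal to $1.2n$. Then either $\mathrm{ML}(v_1,\ldots,v_n)=\frac{1}{n+1}$, or $\mathrm{ML}(v_1,\ldots,v_n)=\frac{2}{2n+1}$, or $\mathrm{ML}(v_1,\ldots,v_n)\ge\frac1n$.
   Context: For a real number $x$, $\Vert x\Vert$ denotes the distance from $x$ to the nearest integer. For positive integers $v_1,\ldots,v_n$, the maximum loneliness is $\mathrm{ML}(v_1,\ldots,v_n)=\max_{t\in\mathbb{R}}\min_{1\le i\le n}\Vert t v_i\Vert$. *)

theory Defs
  imports "HOL-Analysis.Analysis"
begin

definition dist_int :: "real \<Rightarrow> real" where
  "dist_int x = \<bar>x - of_int (round x)\<bar>"

definition max_loneliness :: "nat \<Rightarrow> (nat \<Rightarrow> nat) \<Rightarrow> real" where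
  "max_loneliness n v = (SUP t::real. Min ((\<lambda>i. dist_int (t * real (v i))) ` {1..n}))"

end

theory Submission
  imports Defs
begin


lemma dist_ge:
  fixes p q :: int and c :: real
  assumes "q > 0" "\<And>m::int. c \<le> \<bar>of_int (p - m*q)\<bar>"
  shows "c / of_int q \<le> dist_int (of_int p / of_int q)"
proof -
  define r where "r = round (of_int p / of_int q :: real)"
  have qn: "(of_int q :: real) > 0" using assms(1) by simp
  have "(of_int p / of_int q :: real) - of_int r = of_int (p - r * q) / of_int q"
    using qn by (simp add: field_simps)
  then have "dist_int (of_int p / of_int q) = \<bar>of_int (p - r * q) :: real\<bar> / of_int q"
    using qn unfolding dist_int_def r_def[symmetric] by simp
  then show ?thesis using assms(2)[of r] qn
    by (simp add: divide_right_mono)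
qed

lemma dist_le: "dist_int x \<le> \<bar>x - of_int m\<bar>"
  unfolding dist_int_def by (rule round_diff_minimal)

lemma dist_half: "dist_int x \<le> 1/2"
  unfolding dist_int_def using of_int_round_ge[of x] of_int_round_le[of x] by linarith

lemma loneliness_ge:
  assumes "n \<ge> 1" "\<And>i. i \<in> {1..n} \<Longrightarrow> c \<le> dist_int (t * real (v i))"
  shows "c \<le> max_loneliness n v"
proof -
  have "c \<le> Min ((\<lambda>i. dist_int (t * real (v i))) ` {1..n})"
    using assms by (subst Min_ge_iff) auto
  moreover have "bdd_above (range (\<lambda>t. Min ((\<lambda>i. dist_int (t * real (v i))) ` {1..n})))"
  proof (rule bdd_aboveI)
    fix x assume "x \<in> range (\<lambda>t. Min ((\<lambda>i. dist_int (t * real (v i))) ` {1..n}))"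
    then obtain s where x: "x = Min ((\<lambda>i. dist_int (s * real (v i))) ` {1..n})" by auto
    have "x \<le> dist_int (s * real (v 1))" unfolding x using assms(1) by (intro Min_le) auto
    then show "x \<le> 1/2" using dist_half by (meson order_trans)
  qed
  ultimately show ?thesis unfolding max_loneliness_def
    by (meson cSUP_upper2 UNIV_I)
qed

lemma loneliness_le:
  assumes "\<And>t. Min ((\<lambda>i. dist_int (t * real (v i))) ` {1..n}) \<le> c"
  shows "max_loneliness n v \<le> c"
  unfolding max_loneliness_def by (rule cSUP_least) (use assms in auto)



lemma good_div:
  fixes A :: "nat set"
  assumes "1 \<le> w" "w \<le> n" "\<forall>a\<in>A. \<not> w dvd a"
  shows "\<exists>t. \<forall>a\<in>A. 1 / real n \<le> dist_int (t * real a)"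
proof (intro exI ballI)
  fix a assume a: "a \<in> A"
  have wpos: "int w > 0" using assms by simp
  have "\<And>m::int. 1 \<le> \<bar>of_int (int a - m * int w) :: real\<bar>"
  proof -
    fix m :: int
    have "int a - m * int w \<noteq> 0"
    proof
      assume "int a - m * int w = 0"
      then have "int w dvd int a" by (metis dvd_triv_right eq_iff_diff_eq_0)
      then show False using assms(3) a by simp
    qed
    then have "1 \<le> \<bar>int a - m * int w\<bar>" by linarith
    then show "1 \<le> \<bar>of_int (int a - m * int w) :: real\<bar>"
      by (metis of_int_1_le_iff of_int_abs)
  qed
  from dist_ge[OF wpos this] have "1 / real w \<le> dist_int (real a / real w)" by simp
  moreover have "1 / real n \<le> 1 / real w" using assms by (simp add: frac_le)
  ultimately show "1 / real n \<le> dist_int (1 / real w * real a)" by simp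
qed

lemma good_mod:
  fixes A :: "nat set" and u v0 :: int
  assumes "A \<subseteq> {1..N}" "N < q" "0 < w" "w < q" "w \<notin> A" "q - w \<notin> A"
    and "u * int w + v0 * int q = 1" "q \<le> 2 * n"
  shows "\<exists>t. \<forall>a\<in>A. 1 / real n \<le> dist_int (t * real a)"
proof (intro exI ballI)
  fix a assume a: "a \<in> A"
  have a1: "1 \<le> a" "a \<le> N" using a assms(1) by auto
  have qpos: "int q > 0" using assms by simp
  have key: "2 \<le> \<bar>u * int a - m * int q\<bar>" for m :: int
  proof (rule ccontr)
    assume "\<not> 2 \<le> \<bar>u * int a - m * int q\<bar>"
    define e where "e = u * int a - m * int q"
    have e: "e = -1 \<or> e = 0 \<or> e = 1" using \<open>\<not> 2 \<le> \<bar>u * int a - m * int q\<bar>\<close>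
      unfolding e_def by linarith
    define K where "K = v0 * int a + m * int w"
    have uw: "u * int w = 1 - v0 * int q" using assms(7) by linarith
    have "int a - e * int w = int a - int a * (u * int w) + m * int q * int w"
      by (simp add: e_def algebra_simps)
    also have "\<dots> = K * int q" by (simp add: uw K_def algebra_simps)
    finally have eq: "int a - e * int w = K * int q" .
    consider "e = -1" | "e = 0" | "e = 1" using e by auto
    then show False
    proof cases
      case 1
      then have "int a + int w = K * int q" using eq by simp
      moreover have "0 < int a + int w" "int a + int w < 2 * int q" using a1 assms by auto
      ultimately have "0 < K * int q" "K * int q < 2 * int q" by auto
      then have "K > 0" "K < 2" using qpos by (simp_all add: zero_less_mult_iff)
      then have "K = 1" by simp
      then have "a = q - w" using \<open>int a + int w = K * int q\<close> by simp
      then show False using a assms(6) by simp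
    next
      case 2
      then have "int a = K * int q" using eq by simp
      moreover have "0 < int a" "int a < 1 * int q" using a1 assms by auto
      ultimately have "0 < K" "K < 1" using qpos by (simp_all add: zero_less_mult_iff)
      then show False by simp
    next
      case 3
      then have "int a - int w = K * int q" using eq by simp
      moreover have "- int q < int a - int w" "int a - int w < int q" using a1 assms by auto
      ultimately have "- 1 * int q < K * int q" "K * int q < 1 * int q" by auto
      then have "-1 < K" "K < 1" using qpos by (simp_all only: mult_less_cancel_right)
      then have "K = 0" by simp
      then have "a = w" using \<open>int a - int w = K * int q\<close> by simp
      then show False using a assms(5) by simp
    qed
  qed
  have "\<And>m::int. 2 \<le> \<bar>of_int (u * int a - m * int q) :: real\<bar>"
  proof -
    fix m :: int
    have "(2::real) \<le> of_int \<bar>u * int a - m * int q\<bar>" using key[of m] by linarith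
    then show "2 \<le> \<bar>of_int (u * int a - m * int q) :: real\<bar>" by simp
  qed
  from dist_ge[OF qpos this] have "2 / real q \<le> dist_int (of_int (u * int a) / real q)" by simp
  moreover have "1 / real n \<le> 2 / real q" using assms(8) assms(3) assms(4)
    by (simp add: field_simps)
  ultimately show "1 / real n \<le> dist_int (of_int u / real q * real a)" by simp
qed



lemma floor_same:
  fixes x y :: real
  assumes "\<lfloor>x\<rfloor> = \<lfloor>y\<rfloor>"
  shows "\<bar>x - y\<bar> < 1"
  using assms floor_correct[of x] floor_correct[of y] by linarith

lemma dirichlet:
  fixes t :: real
  assumes "n \<ge> 1"
  shows "\<exists>k\<in>{1..n}. dist_int (t * real k) \<le> 1 / (real n + 1)"
proof -
  define b where "b k = nat \<lfloor>(real n + 1) * frac (t * real k)\<rfloor>" for k :: nat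
  have np: "real n + 1 > 0" by simp
  have bR: "b k \<in> {0..n}" for k
  proof -
    have "frac (t * real k) < 1" "0 \<le> frac (t * real k)" by (simp_all add: frac_lt_1)
    then have "(real n + 1) * frac (t * real k) < real n + 1"
      using np by simp
    then have "\<lfloor>(real n + 1) * frac (t * real k)\<rfloor> < int n + 1"
      unfolding floor_less_iff by simp
    then have "\<lfloor>(real n + 1) * frac (t * real k)\<rfloor> \<le> int n" by linarith
    then show ?thesis unfolding b_def by simp
  qed
  have b0: "b 0 = 0" unfolding b_def by simp
  have H: "\<exists>k\<in>{1..n}. dist_int (t * real k) \<le> 1 / (real n + 1)"
    if ij: "i < j" "j \<le> n" "b i = b j" for i j
  proof -
    have fi: "0 \<le> (real n + 1) * frac (t * real i)" "0 \<le> (real n + 1) * frac (t * real j)"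
      by simp_all
    have "\<lfloor>(real n + 1) * frac (t * real i)\<rfloor> = \<lfloor>(real n + 1) * frac (t * real j)\<rfloor>"
      using ij(3) fi unfolding b_def by (simp add: nat_eq_iff2)
    from floor_same[OF this]
    have "\<bar>(real n + 1) * (frac (t * real j) - frac (t * real i))\<bar> < 1"
      by (metis abs_minus_commute right_diff_distrib)
    then have "(real n + 1) * \<bar>frac (t * real j) - frac (t * real i)\<bar> < 1"
      by (metis abs_mult abs_of_pos np)
    then have d: "\<bar>frac (t * real j) - frac (t * real i)\<bar> < 1 / (real n + 1)"
      using np by (simp add: pos_less_divide_eq mult.commute)
    define m where "m = \<lfloor>t * real j\<rfloor> - \<lfloor>t * real i\<rfloor>"
    have "t * real (j - i) - of_int m = frac (t * real j) - frac (t * real i)"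
      using ij unfolding m_def frac_def by (simp add: of_nat_diff algebra_simps)
    then have "dist_int (t * real (j - i)) \<le> 1 / (real n + 1)"
      using dist_le[of "t * real (j - i)" m] d by linarith
    moreover have "j - i \<in> {1..n}" using ij by auto
    ultimately show ?thesis by blast
  qed
  show ?thesis
  proof (cases "inj_on b {0..n}")
    case False
    then obtain i j where "i \<in> {0..n}" "j \<in> {0..n}" "i \<noteq> j" "b i = b j"
      unfolding inj_on_def by blast
    then show ?thesis using H[of i j] H[of j i] by (cases "i < j") auto
  next
    case True
    have "b ` {0..n} \<subseteq> {0..n}" using bR by auto
    moreover have "card (b ` {0..n}) = card {0..n}" using True by (simp add: card_image)
    ultimately have "b ` {0..n} = {0..n}" by (simp add: card_subset_eq)
    then obtain k where k: "k \<in> {0..n}" "b k = n" by (metis atLeastAtMost_iff imageE order_refl zero_le)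
    have k0: "k \<noteq> 0"
    proof
      assume "k = 0" then have "n = 0" using k(2) b0 by simp
      then show False using assms by simp
    qed
    have "int n \<le> \<lfloor>(real n + 1) * frac (t * real k)\<rfloor>"
      using k(2) assms unfolding b_def by (auto simp: nat_eq_iff split: if_splits)
    then have "real n \<le> (real n + 1) * frac (t * real k)"
      by (metis le_floor_iff of_int_of_nat_eq)
    then have fr: "real n / (real n + 1) \<le> frac (t * real k)" using np by (simp add: field_simps)
    have "1 - real n / (real n + 1) = 1 / (real n + 1)" using np by (simp add: field_simps)
    moreover have "\<bar>t * real k - of_int (\<lfloor>t * real k\<rfloor> + 1)\<bar> = 1 - frac (t * real k)"
      unfolding frac_def using frac_lt_1[of "t * real k"] unfolding frac_def by simp
    ultimately have "dist_int (t * real k) \<le> 1 / (real n + 1)"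
      using dist_le[of "t * real k" "\<lfloor>t * real k\<rfloor> + 1"] fr by linarith
    then show ?thesis using k k0 by auto
  qed
qed



lemma mult_ge_cases:
  fixes w c :: nat
  assumes "c \<noteq> 0" "c \<noteq> 1"
  shows "2 * w \<le> w * c"
  using assms by (metis One_nat_def le_antisym mult.commute mult_le_mono1 not_less_eq_eq one_add_one plus_1_eq_Suc zero_less_iff_neq_zero Suc_leI)

lemma mult_ge_cases3:
  fixes w c :: nat
  assumes "c \<noteq> 0" "c \<noteq> 1" "c \<noteq> 2"
  shows "3 * w \<le> w * c"
proof -
  have "3 \<le> c" using assms by linarith
  then show ?thesis by (metis mult.commute mult_le_mono1)
qed

lemma lower_main:
  fixes A :: "nat set" and n N :: nat
  assumes fin: "finite A" and AN: "A \<subseteq> {1..N}" and NN: "5 * N \<le> 6 * n"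
    and cA: "card A \<le> n" and nsub: "\<not> {1..n} \<subseteq> A"
  shows "\<exists>t. \<forall>a\<in>A. 1 / real n \<le> dist_int (t * real a)"
proof (rule ccontr)
  assume no: "\<not> ?thesis"
  define M where "M = {1..n} - A"
  have claim: "n < 2 * w \<and> 2 * w \<in> A \<and> 2 * w + 1 \<in> A" if wM: "w \<in> M" for w
  proof -
    have w: "1 \<le> w" "w \<le> n" "w \<notin> A" using wM unfolding M_def by auto
    have big: "n < 2 * w"
    proof (rule ccontr)
      assume "\<not> n < 2 * w"
      then have w2: "2 * w \<le> n" by simp
      show False
      proof (cases "2 * w + N \<le> 2 * n")
        case True
        define d where "d = (2 * n - 1) div w"
        define q where "q = w * d + 1"
        have e1: "w * d + (2 * n - 1) mod w = 2 * n - 1" unfolding d_def by simp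
        have e2: "(2 * n - 1) mod w < w" using w by simp
        have q1: "q \<le> 2 * n" using e1 w unfolding q_def by linarith
        have q2: "N + w < q" using e1 e2 True w unfolding q_def by linarith
        have "\<exists>t. \<forall>a\<in>A. 1 / real n \<le> dist_int (t * real a)"
        proof (rule good_mod[OF AN _ _ _ w(3), of q "- int d" 1])
          show "N < q" "0 < w" "w < q" using q2 w by auto
          show "q - w \<notin> A"
          proof
            assume "q - w \<in> A" then have "q - w \<le> N" using AN by auto
            then show False using q2 by linarith
          qed
          show "- int d * int w + 1 * int q = 1" unfolding q_def by (simp add: algebra_simps)
          show "q \<le> 2 * n" by (rule q1)
        qed
        then show False using no by blast
      next
        case False
        then have w3: "N + 2 \<le> 3 * w" using NN by linarith
        define q where "q = 4 * w - 1"
        have "\<exists>t. \<forall>a\<in>A. 1 / real n \<le> dist_int (t * real a)"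
        proof (rule good_mod[OF AN _ _ _ w(3), of q 4 "- 1"])
          show "N < q" "0 < w" "w < q" using w3 w unfolding q_def by auto
          show "q - w \<notin> A"
          proof
            assume "q - w \<in> A" then have "q - w \<le> N" using AN by auto
            then show False using w3 unfolding q_def by linarith
          qed
          show "4 * int w + - 1 * int q = 1" unfolding q_def using w by (simp add: of_nat_diff)
          show "q \<le> 2 * n" using w2 unfolding q_def by linarith
        qed
        then show False using no by blast
      qed
    qed
    have w3N: "N < 3 * w" using big NN by linarith
    have c1: "2 * w \<le> N"
    proof (rule ccontr)
      assume h: "\<not> 2 * w \<le> N"
      have "\<forall>a\<in>A. \<not> w dvd a"
      proof (intro ballI notI)
        fix a assume a: "a \<in> A" "w dvd a"
        then obtain c where c: "a = w * c" by (auto elim: dvdE)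
        have "a \<ge> 1" "a \<le> N" using a AN by auto
        then have "c \<noteq> 0" using c by auto
        moreover have "c \<noteq> 1" using c a w by auto
        ultimately have "2 * w \<le> a" using c mult_ge_cases by simp
        then show False using h \<open>a \<le> N\<close> by simp
      qed
      then show False using good_div[OF w(1) w(2)] no by blast
    qed
    have c2: "2 * w \<in> A"
    proof (rule ccontr)
      assume h: "2 * w \<notin> A"
      have "\<forall>a\<in>A. \<not> w dvd a"
      proof (intro ballI notI)
        fix a assume a: "a \<in> A" "w dvd a"
        then obtain c where c: "a = w * c" by (auto elim: dvdE)
        have "a \<ge> 1" "a \<le> N" using a AN by auto
        then have "c \<noteq> 0" using c by auto
        moreover have "c \<noteq> 1" using c a w by auto
        moreover have "c \<noteq> 2" using c a h by (auto simp: mult.commute)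
        ultimately have "3 * w \<le> a" using c mult_ge_cases3 by simp
        then show False using w3N \<open>a \<le> N\<close> by simp
      qed
      then show False using good_div[OF w(1) w(2)] no by blast
    qed
    have c3: "2 * w + 1 \<in> A"
    proof (rule ccontr)
      assume h: "2 * w + 1 \<notin> A"
      define q where "q = 3 * w + 1"
      have "\<exists>t. \<forall>a\<in>A. 1 / real n \<le> dist_int (t * real a)"
      proof (rule good_mod[OF AN _ _ _ w(3), of q "- 3" 1])
        show "N < q" "0 < w" "w < q" using w3N w unfolding q_def by auto
        show "q - w \<notin> A" using h unfolding q_def by simp
        show "- 3 * int w + 1 * int q = 1" unfolding q_def by simp
        show "q \<le> 2 * n" using c1 NN big unfolding q_def by linarith
      qed
      then show False using no by blast
    qed
    show ?thesis using big c2 c3 by blast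
  qed
  have Mne: "M \<noteq> {}" using nsub unfolding M_def by auto
  have finM: "finite M" unfolding M_def by simp
  define P where "P = {1..n} \<inter> A"
  define E where "E = (\<lambda>w. 2 * w) ` M"
  define O' where "O' = (\<lambda>w. 2 * w + 1) ` M"
  have cP: "card P + card M = n"
  proof -
    have "{1..n} = P \<union> M" "P \<inter> M = {}" unfolding P_def M_def by auto
    moreover have "finite P" "finite M" unfolding P_def M_def by auto
    ultimately have "card {1..n} = card P + card M" by (metis card_Un_disjoint)
    then show ?thesis by simp
  qed
  have cE: "card E = card M" unfolding E_def by (rule card_image) (auto simp: inj_on_def)
  have cO: "card O' = card M" unfolding O'_def by (rule card_image) (auto simp: inj_on_def)
  have d1: "P \<inter> E = {}" unfolding P_def E_def using claim by fastforce
  have d2: "(P \<union> E) \<inter> O' = {}"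
  proof -
    have False if x: "x \<in> P \<union> E" "x \<in> O'" for x
    proof -
      obtain w where w: "w \<in> M" "x = 2 * w + 1" using x(2) unfolding O'_def by auto
      have "n < x" using claim[OF w(1)] w(2) by simp
      then have "x \<notin> P" unfolding P_def by simp
      then have "x \<in> E" using x(1) by simp
      then obtain w' where "x = 2 * w'" unfolding E_def by auto
      then show False using w(2) by presburger
    qed
    then show ?thesis by blast
  qed
  have finE: "finite E" "finite O'" "finite P" unfolding E_def O'_def P_def using finM by auto
  have sub: "P \<union> E \<union> O' \<subseteq> A" unfolding P_def E_def O'_def using claim by auto
  have "card (P \<union> E \<union> O') = card P + card E + card O'"
    using d1 d2 finE by (simp add: card_Un_disjoint)
  also have "\<dots> = n + card M" using cP cE cO by simp
  finally have "n + card M \<le> card A" using card_mono[OF fin sub] by simp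
  moreover have "card M > 0" using Mne finM by auto
  ultimately show False using cA by simp
qed



theorem proposition11p2:
  fixes n :: nat and v :: "nat \<Rightarrow> nat"
  assumes "n \<ge> 2"
    and "\<And>i. i \<in> {1..n} \<Longrightarrow> v i > 0"
    and "\<And>i. i \<in> {1..n} \<Longrightarrow> real (v i) \<le> 1.2 * real n"
  shows "max_loneliness n v = 1 / (real n + 1) \<or> max_loneliness n v = 2 / (2 * real n + 1) \<or> max_loneliness n v \<ge> 1 / real n"
proof -
  define A where "A = v ` {1..n}"
  define N where "N = 6 * n div 5"
  have fin: "finite A" unfolding A_def by simp
  have cA: "card A \<le> n" unfolding A_def using card_image_le[of "{1..n}" v] by simp
  have NN: "5 * N \<le> 6 * n" unfolding N_def by simp
  have AN: "A \<subseteq> {1..N}"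
  proof
    fix a assume "a \<in> A"
    then obtain i where i: "i \<in> {1..n}" "a = v i" unfolding A_def by auto
    have "5 * real (v i) \<le> 6 * real n" using assms(3)[OF i(1)] by simp
    then have "5 * v i \<le> 6 * n" by (metis of_nat_le_iff of_nat_mult of_nat_numeral)
    then have "v i \<le> N"
      unfolding N_def using div_le_mono[of "5 * v i" "6 * n" 5] by simp
    then show "a \<in> {1..N}" using assms(2)[OF i(1)] i(2) by auto
  qed
  have n1: "n \<ge> 1" using assms(1) by simp
  show ?thesis
  proof (cases "{1..n} \<subseteq> A")
    case True
    have AE: "A = {1..n}"
      using card_subset_eq[OF fin True] cA card_mono[OF fin True] by simp
    have "max_loneliness n v = 1 / (real n + 1)"
    proof (rule antisym)
      show "max_loneliness n v \<le> 1 / (real n + 1)"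
      proof (rule loneliness_le)
        fix t
        obtain k where k: "k \<in> {1..n}" "dist_int (t * real k) \<le> 1 / (real n + 1)"
          using dirichlet[OF n1, of t] by blast
        have "k \<in> v ` {1..n}" using AE k(1) unfolding A_def by simp
        then obtain i where i: "i \<in> {1..n}" "k = v i" by blast
        have "Min ((\<lambda>i. dist_int (t * real (v i))) ` {1..n}) \<le> dist_int (t * real (v i))"
          using i by (intro Min_le) auto
        moreover have "dist_int (t * real (v i)) \<le> 1 / (real n + 1)" using k i by simp
        ultimately show "Min ((\<lambda>i. dist_int (t * real (v i))) ` {1..n}) \<le> 1 / (real n + 1)"
          by (rule order.trans)
      qed
    next
      show "1 / (real n + 1) \<le> max_loneliness n v"
      proof (rule loneliness_ge[OF n1, of _ "1 / (real n + 1)"])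
        fix i assume i: "i \<in> {1..n}"
        have vi: "1 \<le> v i" "v i \<le> n" using i AE unfolding A_def by auto
        have qpos: "int n + 1 > 0" by simp
        have "\<And>m::int. 1 \<le> \<bar>of_int (int (v i) - m * (int n + 1)) :: real\<bar>"
        proof -
          fix m :: int
          have "int (v i) - m * (int n + 1) \<noteq> 0"
          proof
            assume h: "int (v i) - m * (int n + 1) = 0"
            show False
            proof (cases "m \<ge> 1")
              case True
              then have "1 * (int n + 1) \<le> m * (int n + 1)" by (intro mult_right_mono) auto
              then have "int n + 1 \<le> int (v i)" using h by simp
              then show False using vi by linarith
            next
              case False
              then have "m * (int n + 1) \<le> 0" by (simp add: mult_nonpos_nonneg)
              then have "int (v i) \<le> 0" using h by simp
              then show False using vi by linarith
            qed
          qed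
          then have "1 \<le> \<bar>int (v i) - m * (int n + 1)\<bar>" by linarith
          then show "1 \<le> \<bar>of_int (int (v i) - m * (int n + 1)) :: real\<bar>"
            by (metis of_int_1_le_iff of_int_abs)
        qed
        from dist_ge[OF qpos this]
        show "1 / (real n + 1) \<le> dist_int (1 / (real n + 1) * real (v i))"
          by simp
      qed
    qed
    then show ?thesis by simp
  next
    case False
    obtain t where t: "\<forall>a\<in>A. 1 / real n \<le> dist_int (t * real a)"
      using lower_main[OF fin AN NN cA False] by blast
    have "1 / real n \<le> max_loneliness n v"
      by (rule loneliness_ge[OF n1, where t=t]) (use t in \<open>auto simp: A_def\<close>)
    then show ?thesis by simp
  qed
qed

end
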